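(* If $L\in\mathrm{Gr}(V,m)$ and $L\cap\operatorname{int}(K)\neq\emptyset$, then $$\sigma(L)=\min_{v\in K,\ |||v|||=1}\ \max_{x\in L,\ \|x\|=1}\lambda_v(x)=\min_{v\in K,\ y\in L^\perp,\ u\in K^*,\ |||v|||=1,\ \langle u,v\rangle=1}\|u-y\|^*.$$
   Context: $V$ is a finite-dimensional real vector space with inner product $\langle\cdot,\cdot\rangle$; $K\subseteq V$ a regular closed convex cone (closed, convex, pointed, nonempty interior) with dual cone $K^*:=\{u:\langle u,x\rangle\ge0\ \forall x\in K\}$; $L^\perp$ the orthogonal complement; $\mathrm{Gr}(V,m)$ the set of $m$-dimensional subspaces ($1\le m<\dim V$). $\|\cdot\|,|||\cdot|||$ are arbitrary norms on $V$, $\|u\|^*:=\max_{\|x\|=1}\langle u,x\rangle$. For $v\in K\setminus\{0\}$ and $x\in V$, $\lambda_v(x):=\sup\{t\in\mathbb R: x-tv\in K\}\in[-\infty,\infty)$, and $\sigma(L):=\min_{v\in K,|||v|||=1}\max_{x\in L,\|x\|\le1}\lambda_v(x)$. *)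

theory Defs
  imports "HOL-Analysis.Analysis"
begin

definition is_norm :: "('a::real_vector \<Rightarrow> real) \<Rightarrow> bool" where
  "is_norm N \<longleftrightarrow> (\<forall>x. 0 \<le> N x) \<and> (\<forall>x. N x = 0 \<longleftrightarrow> x = 0)
     \<and> (\<forall>c x. N (c *\<^sub>R x) = \<bar>c\<bar> * N x) \<and> (\<forall>x y. N (x + y) \<le> N x + N y)"

definition dual_norm :: "('a::real_inner \<Rightarrow> real) \<Rightarrow> 'a \<Rightarrow> real" where
  "dual_norm N u = Sup {inner u x | x. N x = 1}"

definition regular_cone :: "'a::euclidean_space set \<Rightarrow> bool" where
  "regular_cone K \<longleftrightarrow> K \<noteq> {} \<and> cone K \<and> closed K \<and> convex K
     \<and> K \<inter> uminus ` K = {0} \<and> interior K \<noteq> {}"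

definition dual_cone :: "'a::real_inner set \<Rightarrow> 'a set" where
  "dual_cone K = {u. \<forall>x\<in>K. 0 \<le> inner u x}"

text \<open>lambda_v(x) = sup {t. x - t v \<in> K}, valued in [-\<infinity>,\<infinity>) (Sup of empty set is -\<infinity>).\<close>
definition lam :: "'a::real_vector set \<Rightarrow> 'a \<Rightarrow> 'a \<Rightarrow> ereal" where
  "lam K v x = Sup (ereal ` {t. x - t *\<^sub>R v \<in> K})"

definition sigma :: "'a::real_vector set \<Rightarrow> ('a \<Rightarrow> real) \<Rightarrow> ('a \<Rightarrow> real) \<Rightarrow> 'a set \<Rightarrow> ereal" where
  "sigma K N M L = (INF v\<in>{v\<in>K. M v = 1}. SUP x\<in>{x\<in>L. N x \<le> 1}. lam K v x)"

end

theory Submission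
  imports Defs
begin

lemma isn_sum: assumes "is_norm N" "finite A" shows "N (sum f A) \<le> (\<Sum>a\<in>A. N (f a))"
  using assms(2)
proof (induction A rule: finite_induct)
  case empty then show ?case using assms(1) unfolding is_norm_def by (metis order.refl sum.empty)
next
  case (insert a A)
  have "N (f a + sum f A) \<le> N (f a) + N (sum f A)" using assms(1) by (simp add: is_norm_def)
  then show ?case using insert by simp
qed

lemma isn_upper: fixes N :: "'a::euclidean_space \<Rightarrow> real"
  assumes "is_norm N" shows "\<exists>C>0. \<forall>x. N x \<le> C * norm x"
proof -
  define C where "C = (\<Sum>b\<in>Basis. N b) + 1"
  have Nb: "0 \<le> N b" for b using assms by (simp add: is_norm_def)
  have C0: "C > 0" unfolding C_def using Nb by (simp add: add_nonneg_pos sum_nonneg)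
  have "N x \<le> C * norm x" for x
  proof -
    have "N x = N (\<Sum>b\<in>Basis. (x \<bullet> b) *\<^sub>R b)" by (simp add: euclidean_representation)
    also have "\<dots> \<le> (\<Sum>b\<in>Basis. N ((x \<bullet> b) *\<^sub>R b))" by (rule isn_sum[OF assms]) simp
    also have "\<dots> = (\<Sum>b\<in>Basis. \<bar>x \<bullet> b\<bar> * N b)" using assms by (simp add: is_norm_def)
    also have "\<dots> \<le> (\<Sum>b\<in>Basis. norm x * N b)"
      by (intro sum_mono mult_right_mono Nb) (simp add: Basis_le_norm)
    also have "\<dots> = norm x * (C - 1)" by (simp add: C_def sum_distrib_left)
    also have "\<dots> \<le> C * norm x" by (simp add: algebra_simps)
    finally show ?thesis .
  qed
  with C0 show ?thesis by blast
qed

lemma isn_basic: assumes "is_norm N"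
  shows "N 0 = 0" "N (-x) = N x" "N (x - y) \<ge> N x - N y" "N (x + y) \<le> N x + N y" "0 \<le> N x"
    "N (c *\<^sub>R x) = \<bar>c\<bar> * N x" "N x = 0 \<longleftrightarrow> x = 0"
proof -
  show "N (c *\<^sub>R x) = \<bar>c\<bar> * N x" "N (x + y) \<le> N x + N y" "0 \<le> N x" "N x = 0 \<longleftrightarrow> x = 0"
    using assms by (auto simp: is_norm_def)
  show "N 0 = 0" using assms unfolding is_norm_def by blast
  have "N ((-1) *\<^sub>R x) = \<bar>-1\<bar> * N x" using assms by (simp only: is_norm_def)
  then show "N (-x) = N x" by simp
  have "N x \<le> N (x - y) + N y" using assms unfolding is_norm_def by (metis diff_add_cancel)
  then show "N (x - y) \<ge> N x - N y" by simp
qed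

lemma isn_cont: fixes N :: "'a::euclidean_space \<Rightarrow> real"
  assumes "is_norm N" shows "continuous_on S N"
proof -
  obtain C where C: "C > 0" "\<And>x. N x \<le> C * norm x" using isn_upper[OF assms] by blast
  have "\<bar>N x - N y\<bar> \<le> C * dist x y" for x y
  proof -
    have "N x - N y \<le> N (x - y)" "N y - N x \<le> N (y - x)" using isn_basic[OF assms] by auto
    moreover have "N (x - y) \<le> C * dist x y" "N (y - x) \<le> C * dist x y"
      using C(2)[of "x-y"] C(2)[of "y - x"] by (auto simp: dist_norm norm_minus_commute)
    ultimately show ?thesis by linarith
  qed
  then show ?thesis unfolding continuous_on_iff
    by (metis C(1) dist_real_def le_less_trans mult.commute pos_less_divide_eq zero_less_divide_iff)
qed

lemma isn_lower: fixes N :: "'a::euclidean_space \<Rightarrow> real"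
  assumes "is_norm N" shows "\<exists>c>0. \<forall>x. c * norm x \<le> N x"
proof -
  obtain b :: 'a where b: "b \<in> Basis" using nonempty_Basis by blast
  have ne: "sphere (0::'a) 1 \<noteq> {}" using b by (auto intro!: exI[of _ b])
  obtain x1 where x1: "x1 \<in> sphere 0 1" "\<And>y. y \<in> sphere 0 1 \<Longrightarrow> N x1 \<le> N y"
    using continuous_attains_inf[OF compact_sphere ne isn_cont[OF assms]] by blast
  have c0: "N x1 > 0" using x1(1) assms by (auto simp: is_norm_def less_le)
  have "N x1 * norm x \<le> N x" for x
  proof (cases "x = 0")
    case True then show ?thesis using isn_basic[OF assms] by simp
  next
    case False
    have "N x1 \<le> N ((1 / norm x) *\<^sub>R x)" using x1(2) False by simp
    also have "\<dots> = N x / norm x" using isn_basic(6)[OF assms] by simp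
    finally show ?thesis using False by (simp add: field_simps)
  qed
  with c0 show ?thesis by blast
qed

lemma isn_sphere_bound: fixes N :: "'a::euclidean_space \<Rightarrow> real"
  assumes "is_norm N" shows "\<exists>D>0. \<forall>x. N x = 1 \<longrightarrow> norm x \<le> D"
proof -
  obtain c where c: "c > 0" "\<And>x. c * norm x \<le> N x" using isn_lower[OF assms] by blast
  have "norm x \<le> 1 / c" if "N x = 1" for x using c(2)[of x] c(1) that by (simp add: field_simps)
  then show ?thesis using c(1) by (intro exI[of _ "1/c"]) auto
qed

lemma dn_bdd: fixes N :: "'a::euclidean_space \<Rightarrow> real"
  assumes "is_norm N" shows "bdd_above {inner u x |x. N x = 1}"
proof -
  obtain D where D: "D > 0" "\<And>x. N x = 1 \<Longrightarrow> norm x \<le> D" using isn_sphere_bound[OF assms] by blast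
  have "inner u x \<le> norm u * D" if "N x = 1" for x
    using norm_cauchy_schwarz[of u x] D(2)[OF that] mult_left_mono[of "norm x" D "norm u"]
    by (smt (verit) norm_ge_zero)
  then show ?thesis by (auto intro!: bdd_aboveI[of _ "norm u * D"])
qed

lemma isn_exists1: fixes N :: "'a::euclidean_space \<Rightarrow> real"
  assumes "is_norm N" shows "\<exists>x. N x = 1"
proof -
  obtain b :: 'a where b: "b \<in> Basis" using nonempty_Basis by blast
  then have "b \<noteq> 0" by auto
  then have "N b > 0" using isn_basic[OF assms] by (metis less_eq_real_def)
  then have "N ((1 / N b) *\<^sub>R b) = 1" using isn_basic(6)[OF assms] by simp
  then show ?thesis by blast
qed

lemma dn_upper: fixes N :: "'a::euclidean_space \<Rightarrow> real"
  assumes "is_norm N" "N x = 1" shows "inner u x \<le> dual_norm N u"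
  unfolding dual_norm_def using assms by (intro cSup_upper dn_bdd) auto

lemma dn_le: fixes N :: "'a::euclidean_space \<Rightarrow> real"
  assumes "is_norm N" shows "inner u x \<le> dual_norm N u * N x"
proof (cases "x = 0")
  case True then show ?thesis using isn_basic(1)[OF assms] by simp
next
  case False
  then have p: "N x > 0" using isn_basic[OF assms] by (metis less_eq_real_def)
  then have "N ((1 / N x) *\<^sub>R x) = 1" using isn_basic(6)[OF assms] by simp
  then have "inner u ((1 / N x) *\<^sub>R x) \<le> dual_norm N u" by (rule dn_upper[OF assms])
  then show ?thesis using p by (simp add: field_simps)
qed

lemma dn_nonneg: fixes N :: "'a::euclidean_space \<Rightarrow> real"
  assumes "is_norm N" shows "0 \<le> dual_norm N u"
proof -
  obtain x where x: "N x = 1" using isn_exists1[OF assms] by blast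
  have "N (-x) = 1" using x isn_basic[OF assms] by simp
  then have "inner u (-x) \<le> dual_norm N u" by (rule dn_upper[OF assms])
  moreover have "inner u x \<le> dual_norm N u" by (rule dn_upper[OF assms x])
  ultimately show ?thesis by simp
qed

lemma dn_least: fixes N :: "'a::euclidean_space \<Rightarrow> real"
  assumes "is_norm N" "\<And>x. N x = 1 \<Longrightarrow> inner u x \<le> c" shows "dual_norm N u \<le> c"
  unfolding dual_norm_def using assms isn_exists1[OF assms(1)] by (intro cSup_least) auto

lemma dn_cont: fixes N :: "'a::euclidean_space \<Rightarrow> real"
  assumes "is_norm N" shows "continuous_on S (dual_norm N)"
proof -
  obtain D where D: "D > 0" "\<And>x. N x = 1 \<Longrightarrow> norm x \<le> D" using isn_sphere_bound[OF assms] by blast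
  have 1: "dual_norm N u \<le> dual_norm N w + D * dist u w" for u w
  proof (rule dn_least[OF assms])
    fix x assume x: "N x = 1"
    have "inner u x = inner w x + inner (u - w) x" by (simp add: inner_diff_left)
    also have "inner (u - w) x \<le> norm (u - w) * norm x" by (rule norm_cauchy_schwarz)
    also have "norm (u - w) * norm x \<le> norm (u - w) * D" using D(2)[OF x] by (simp add: mult_left_mono)
    finally show "inner u x \<le> dual_norm N w + D * dist u w"
      using dn_upper[OF assms x, of w] by (simp add: dist_norm mult.commute)
  qed
  have "\<bar>dual_norm N u - dual_norm N w\<bar> \<le> D * dist u w" for u w
    using 1[of u w] 1[of w u] by (simp add: dist_commute)
  then show ?thesis unfolding continuous_on_iff
    by (metis D(1) dist_real_def le_less_trans mult.commute pos_less_divide_eq zero_less_divide_iff)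
qed

lemma dn_norm: fixes N :: "'a::euclidean_space \<Rightarrow> real"
  assumes "is_norm N" shows "\<exists>C>0. \<forall>u. norm u \<le> C * dual_norm N u"
proof -
  obtain C where C: "C > 0" "\<And>x. N x \<le> C * norm x" using isn_upper[OF assms] by blast
  have "norm u \<le> C * dual_norm N u" for u
  proof (cases "u = 0")
    case True then show ?thesis using dn_nonneg[OF assms] C by simp
  next
    case False
    have "norm u * norm u = inner u u" by (simp add: power2_norm_eq_inner[symmetric] power2_eq_square)
    also have "\<dots> \<le> dual_norm N u * N u" by (rule dn_le[OF assms])
    also have "\<dots> \<le> dual_norm N u * (C * norm u)" by (intro mult_left_mono C(2) dn_nonneg[OF assms])
    finally show ?thesis using False by (simp add: mult.commute mult.left_commute)
  qed
  with C show ?thesis by blast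
qed

lemma rc_basic: assumes "regular_cone K"
  shows "0 \<in> K" "x \<in> K \<Longrightarrow> 0 \<le> c \<Longrightarrow> c *\<^sub>R x \<in> K"
    "x \<in> K \<Longrightarrow> y \<in> K \<Longrightarrow> x + y \<in> K"
    "x \<in> K \<Longrightarrow> -x \<in> K \<Longrightarrow> x = 0" "closed K" "convex K"
proof -
  have K: "K \<noteq> {}" "cone K" "closed K" "convex K" "K \<inter> uminus ` K = {0}"
    using assms by (auto simp: regular_cone_def)
  show "closed K" "convex K" using K by auto
  show "x \<in> K \<Longrightarrow> 0 \<le> c \<Longrightarrow> c *\<^sub>R x \<in> K" using K(2) by (auto simp: cone_def)
  show "0 \<in> K"
  proof -
    obtain z where "z \<in> K" using K(1) by blast
    then have "0 *\<^sub>R z \<in> K" using K(2) unfolding cone_def by (metis order_refl)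
    then show ?thesis by simp
  qed
  show "x \<in> K \<Longrightarrow> -x \<in> K \<Longrightarrow> x = 0" using K(5)
    by (metis IntI image_eqI minus_minus singletonD)
  assume xy: "x \<in> K" "y \<in> K"
  have "(1/2) *\<^sub>R x + (1/2) *\<^sub>R y \<in> K" using K(4) xy unfolding convex_def by auto
  then have "2 *\<^sub>R ((1/2) *\<^sub>R x + (1/2) *\<^sub>R y) \<in> K" using K(2) unfolding cone_def by auto
  then show "x + y \<in> K" by (simp add: scaleR_add_right)
qed

lemma closed_dual_cone: "closed (dual_cone K)"
proof -
  have "dual_cone K = (\<Inter>x\<in>K. {u. inner x u \<ge> 0})" by (auto simp: dual_cone_def inner_commute)
  then show ?thesis by (auto intro!: closed_INT closed_halfspace_ge)
qed

lemma dual_int_bound: assumes "ball x0 r \<subseteq> K" "r > 0" "u \<in> dual_cone K"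
  shows "(r/2) * norm u \<le> inner u x0"
proof (cases "u = 0")
  case True then show ?thesis by simp
next
  case False
  have "x0 - ((r/2) / norm u) *\<^sub>R u \<in> ball x0 r" using assms(2) False by (simp add: dist_norm)
  then have "x0 - ((r/2) / norm u) *\<^sub>R u \<in> K" using assms(1) by blast
  then have "0 \<le> inner u (x0 - ((r/2) / norm u) *\<^sub>R u)" using assms(3) unfolding dual_cone_def by blast
  also have "\<dots> = inner u x0 - (r/2) / norm u * (norm u * norm u)"
    by (simp add: inner_diff_right power2_norm_eq_inner[symmetric] power2_eq_square)
  also have "\<dots> = inner u x0 - (r/2) * norm u" using False by simp
  finally show ?thesis by simp
qed

lemma lam_le: assumes "\<And>t. x - t *\<^sub>R v \<in> K \<Longrightarrow> t \<le> s" shows "lam K v x \<le> ereal s"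
  unfolding lam_def using assms by (auto intro!: Sup_least)

lemma lam_ge: assumes "x - t *\<^sub>R v \<in> K" shows "ereal t \<le> lam K v x"
  unfolding lam_def using assms by (auto intro!: Sup_upper)

lemma sep1: fixes K A :: "'a::euclidean_space set"
  assumes "regular_cone K" "v \<in> K" "compact A" "convex A" "0 \<in> A"
    "\<And>x t. x \<in> A \<Longrightarrow> x - t *\<^sub>R v \<in> K \<Longrightarrow> t \<le> s" "s < c1"
  shows "\<exists>u\<in>dual_cone K. inner u v = 1 \<and> (\<forall>x\<in>A. inner u x \<le> c1)"
proof -
  note rc = rc_basic[OF assms(1)]
  define D where "D = (\<Union>x\<in>A. \<Union>k\<in>K. {x - k})"
  have cD: "closed D" unfolding D_def by (rule compact_closed_differences[OF assms(3) rc(5)])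
  have vD: "convex D" unfolding D_def by (rule convex_differences[OF assms(4) rc(6)])
  have nD: "c1 *\<^sub>R v \<notin> D"
  proof
    assume "c1 *\<^sub>R v \<in> D"
    then obtain x k where "x \<in> A" "k \<in> K" "c1 *\<^sub>R v = x - k" unfolding D_def by auto
    then have "x - c1 *\<^sub>R v \<in> K" by (metis add_diff_cancel_left' diff_add_cancel diff_diff_eq2)
    with assms(6)[OF \<open>x \<in> A\<close>] assms(7) show False by fastforce
  qed
  obtain a b where ab: "inner a (c1 *\<^sub>R v) < b" "\<And>z. z \<in> D \<Longrightarrow> b < inner a z"
    using separating_hyperplane_closed_point[OF vD cD nD] by blast
  have key: "b < inner a x - inner a k" if "x \<in> A" "k \<in> K" for x k
    using ab(2)[of "x - k"] that unfolding D_def by (auto simp: inner_diff_right)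
  have b0: "b < 0" using key[OF assms(5) rc(1)] by simp
  have ak: "inner a k \<le> 0" if "k \<in> K" for k
  proof (rule ccontr)
    assume "\<not> ?thesis"
    then have p: "inner a k > 0" by simp
    define \<tau> where "\<tau> = (\<bar>b\<bar> + 1) / inner a k"
    have "\<tau> \<ge> 0" using p by (simp add: \<tau>_def)
    then have "b < inner a 0 - inner a (\<tau> *\<^sub>R k)" using key[OF assms(5)] rc(2)[OF that] by blast
    also have "inner a (\<tau> *\<^sub>R k) = \<bar>b\<bar> + 1" using p by (simp add: \<tau>_def)
    finally show False by simp
  qed
  have av: "inner a v < 0"
  proof -
    have "c1 * inner a v < 0" using ab(1) b0 by simp
    moreover have "c1 > 0"
    proof -
      have "0 - 0 *\<^sub>R v \<in> K" using rc(1) by simp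
      then have "0 \<le> s" using assms(6)[OF assms(5)] by blast
      then show ?thesis using assms(7) by simp
    qed
    ultimately show ?thesis by (simp add: mult_less_0_iff)
  qed
  define u where "u = (1 / inner a v) *\<^sub>R a"
  have "u \<in> dual_cone K" unfolding dual_cone_def u_def using ak av
    by (auto simp: divide_nonpos_neg)
  moreover have "inner u v = 1" unfolding u_def using av by simp
  moreover have "inner u x \<le> c1" if "x \<in> A" for x
  proof -
    have "c1 * inner a v < inner a x" using key[OF that rc(1)] ab(1) by simp
    then have "inner a x / inner a v < c1" using av by (simp add: divide_less_eq mult.commute)
    then show ?thesis unfolding u_def by simp
  qed
  ultimately show ?thesis by blast
qed

lemma nball_compact: fixes N :: "'a::euclidean_space \<Rightarrow> real"
  assumes "is_norm N" shows "compact {x. N x \<le> 1}" "convex {x. N x \<le> 1}"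
proof -
  obtain c where c: "c > 0" "\<And>x. c * norm x \<le> N x" using isn_lower[OF assms] by blast
  have "bounded {x. N x \<le> 1}"
    unfolding bounded_iff using c by (intro exI[of _ "1/c"]) (auto simp: field_simps intro: order_trans)
  moreover have "closed {x. N x \<le> 1}"
    by (rule closed_Collect_le[OF isn_cont[OF assms]]) simp
  ultimately show "compact {x. N x \<le> 1}" by (simp add: compact_eq_bounded_closed)
  show "convex {x. N x \<le> 1}" unfolding convex_def
  proof (intro allI impI ballI, simp)
    fix x y :: 'a and a b :: real
    assume xy: "N x \<le> 1" "N y \<le> 1" and ab: "0 \<le> a" "0 \<le> b" "a + b = 1"
    have "N (a *\<^sub>R x + b *\<^sub>R y) \<le> N (a *\<^sub>R x) + N (b *\<^sub>R y)" using isn_basic(4)[OF assms] .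
    also have "\<dots> = a * N x + b * N y" using isn_basic(6)[OF assms] ab by simp
    also have "\<dots> \<le> a * 1 + b * 1" using xy ab by (intro add_mono mult_left_mono) auto
    finally show "N (a *\<^sub>R x + b *\<^sub>R y) \<le> 1" using ab by simp
  qed
qed

lemma sep2: fixes N :: "'a::euclidean_space \<Rightarrow> real"
  assumes "is_norm N" "subspace L" "\<And>x. x \<in> L \<Longrightarrow> N x \<le> 1 \<Longrightarrow> inner u x \<le> c1" "c1 < c"
  shows "\<exists>y\<in>orthogonal_comp L. dual_norm N (u - y) \<le> c"
proof -
  have c0: "0 < c" using assms(3)[of 0] assms(4) isn_basic(1)[OF assms(1)] subspace_0[OF assms(2)] by simp
  show ?thesis
  proof (cases "\<forall>l\<in>L. inner u l = 0")
    case True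
    then have "u \<in> orthogonal_comp L" by (auto simp: orthogonal_comp_def orthogonal_def inner_commute)
    moreover have "dual_norm N (u - u) \<le> c" using c0 by (auto intro!: dn_least[OF assms(1)])
    ultimately show ?thesis by blast
  next
    case False
    then obtain l1 where l1: "l1 \<in> L" "inner u l1 \<noteq> 0" by blast
    define l0 where "l0 = (c / inner u l1) *\<^sub>R l1"
    have l0: "l0 \<in> L" "inner u l0 = c" using l1 assms(2) by (auto simp: l0_def subspace_scale)
    define S where "S = {x. N x \<le> 1}"
    define Z where "Z = {z\<in>L. inner u z = 0}"
    have sZ: "subspace Z" unfolding Z_def using assms(2)
      by (auto simp: subspace_def inner_add_right)
    define T where "T = (\<Union>x\<in>Z. \<Union>y\<in>S. {x + y})"
    have cT: "closed T" unfolding T_def S_def by (rule closed_compact_sums[OF closed_subspace[OF sZ] nball_compact(1)[OF assms(1)]])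
    have vT: "convex T" unfolding T_def S_def by (rule convex_sums[OF subspace_imp_convex[OF sZ] nball_compact(2)[OF assms(1)]])
    have nT: "l0 \<notin> T"
    proof
      assume "l0 \<in> T"
      then obtain z x where zx: "z \<in> Z" "x \<in> S" "l0 = z + x" unfolding T_def by auto
      then have "x = l0 - z" by simp
      have zL: "z \<in> L" "inner u z = 0" using zx(1) unfolding Z_def by auto
      have "x \<in> L" using subspace_diff[OF assms(2) l0(1) zL(1)] \<open>x = l0 - z\<close> by simp
      moreover have "inner u x = c" using \<open>x = l0 - z\<close> l0(2) zL(2) by (simp add: inner_diff_right)
      ultimately have "x \<in> L" "inner u x = c" by auto
      then show False using assms(3)[of x] assms(4) zx(2) unfolding S_def by simp
    qed
    obtain a b where ab: "inner a l0 < b" "\<And>t. t \<in> T \<Longrightarrow> b < inner a t"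
      using separating_hyperplane_closed_point[OF vT cT nT] by blast
    have S0: "0 \<in> S" unfolding S_def using isn_basic(1)[OF assms(1)] by simp
    have key: "b < inner a z + inner a x" if "z \<in> Z" "x \<in> S" for z x
      using ab(2)[of "z + x"] that unfolding T_def by (auto simp: inner_add_right)
    have b0: "b < 0" using key[OF subspace_0[OF sZ] S0] by simp
    have aZ: "inner a z = 0" if "z \<in> Z" for z
    proof (rule ccontr)
      assume ne: "inner a z \<noteq> 0"
      define \<tau> where "\<tau> = - (\<bar>b\<bar> + 1) / inner a z"
      have "\<tau> *\<^sub>R z \<in> Z" using sZ that by (simp add: subspace_scale)
      then have "b < inner a (\<tau> *\<^sub>R z) + inner a 0" using key S0 by blast
      also have "inner a (\<tau> *\<^sub>R z) = - (\<bar>b\<bar> + 1)" using ne by (simp add: \<tau>_def)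
      finally show False by simp
    qed
    define \<alpha> where "\<alpha> = inner a l0 / c"
    have \<alpha>0: "\<alpha> < 0" using ab(1) b0 c0 by (simp add: \<alpha>_def divide_neg_pos)
    define w where "w = (1 / \<alpha>) *\<^sub>R a"
    have wl: "inner w l = inner u l" if "l \<in> L" for l
    proof -
      have "l - (inner u l / c) *\<^sub>R l0 \<in> Z" unfolding Z_def using that l0 assms(2) c0
        by (auto simp: subspace_diff subspace_scale inner_diff_right)
      then have "inner a (l - (inner u l / c) *\<^sub>R l0) = 0" by (rule aZ)
      then have "inner a l = (inner u l / c) * inner a l0" by (simp add: inner_diff_right)
      then have "inner a l = \<alpha> * inner u l" by (simp add: \<alpha>_def)
      then show ?thesis using \<alpha>0 by (simp add: w_def)
    qed
    have "u - w \<in> orthogonal_comp L"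
      using wl by (auto simp: orthogonal_comp_def orthogonal_def inner_diff_right inner_commute)
    moreover have "dual_norm N (u - (u - w)) \<le> c"
    proof (simp, rule dn_least[OF assms(1)])
      fix x assume "N x = 1"
      then have "x \<in> S" unfolding S_def by simp
      then have "b < inner a x" using key[OF subspace_0[OF sZ]] by simp
      then have "inner a l0 < inner a x" using ab(1) by simp
      then have "inner a x / \<alpha> < inner a l0 / \<alpha>" using \<alpha>0 by (simp add: divide_strict_right_mono_neg)
      also have "inner a l0 / \<alpha> = c" using ab(1) b0 c0 by (simp add: \<alpha>_def)
      finally show "inner w x \<le> c" by (simp add: w_def)
    qed
    ultimately show ?thesis by blast
  qed
qed

lemma closed_pre: "closed S \<Longrightarrow> continuous_on UNIV f \<Longrightarrow> closed {p. f p \<in> S}"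
  using continuous_closed_preimage[of UNIV f S] by (simp add: vimage_def)

lemma le_of_all_gt: fixes a s :: real assumes "\<And>c. s < c \<Longrightarrow> a \<le> c" shows "a \<le> s"
proof (rule ccontr)
  assume "\<not> a \<le> s"
  then have "s < (a + s) / 2" by simp
  from assms[OF this] \<open>\<not> a \<le> s\<close> show False by simp
qed

theorem mainTheorem8:
  fixes K L :: "'a::euclidean_space set" and N M :: "'a \<Rightarrow> real" and m :: nat
  assumes "regular_cone K"
    and "is_norm N" and "is_norm M"
    and "subspace L" and "dim L = m" and "1 \<le> m" and "m < DIM('a)"
    and "L \<inter> interior K \<noteq> {}"
  shows "sigma K N M L = (INF v\<in>{v\<in>K. M v = 1}. SUP x\<in>{x\<in>L. N x = 1}. lam K v x)
    \<and> sigma K N M L =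
        (INF (v, y, u)\<in>{(v, y, u). v \<in> K \<and> y \<in> orthogonal_comp L \<and> u \<in> dual_cone K
                       \<and> M v = 1 \<and> inner u v = 1}. ereal (dual_norm N (u - y)))
    \<and> (\<exists>v\<in>K. M v = 1 \<and> sigma K N M L = (SUP x\<in>{x\<in>L. N x \<le> 1}. lam K v x))
    \<and> (\<exists>v\<in>K. M v = 1 \<and> sigma K N M L = (SUP x\<in>{x\<in>L. N x = 1}. lam K v x))
    \<and> (\<exists>v\<in>K. \<exists>y\<in>orthogonal_comp L. \<exists>u\<in>dual_cone K. M v = 1 \<and> inner u v = 1
          \<and> sigma K N M L = ereal (dual_norm N (u - y)))"
proof -
  note rc = rc_basic[OF assms(1)]
  note nN = isn_basic[OF assms(2)] and nM = isn_basic[OF assms(3)]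
  define Bv where "Bv = {v\<in>K. M v = 1}"
  define B where "B = {x\<in>L. N x \<le> 1}"
  define S1 where "S1 = {x\<in>L. N x = 1}"
  define F where "F = (\<lambda>v. SUP x\<in>B. lam K v x)"
  define G where "G = (\<lambda>v. SUP x\<in>S1. lam K v x)"
  define T where "T = {(v, y, u). v \<in> K \<and> y \<in> orthogonal_comp L \<and> u \<in> dual_cone K
                       \<and> M v = 1 \<and> inner u v = 1}"
  define \<phi> where "\<phi> = (\<lambda>p::'a\<times>'a\<times>'a. dual_norm N (snd (snd p) - fst (snd p)))"
  have memT: "(v, y, u) \<in> T \<longleftrightarrow> v \<in> K \<and> y \<in> orthogonal_comp L \<and> u \<in> dual_cone K
                       \<and> M v = 1 \<and> inner u v = 1" for v y u by (simp add: T_def)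
  obtain x0 where x0: "x0 \<in> L" "x0 \<in> interior K" using assms(8) by blast
  obtain r where r: "r > 0" "ball x0 r \<subseteq> K" using x0(2) mem_interior by blast
  have x0K: "x0 \<in> K" using r by auto
  have x0nz: "x0 \<noteq> 0"
  proof
    assume "x0 = 0"
    obtain b :: 'a where b: "b \<in> Basis" using nonempty_Basis by blast
    have "(r/2) *\<^sub>R b \<in> ball x0 r" "-((r/2) *\<^sub>R b) \<in> ball x0 r"
      using \<open>x0 = 0\<close> r(1) b by (auto simp: dist_norm)
    then have "(r/2) *\<^sub>R b \<in> K" "-((r/2) *\<^sub>R b) \<in> K" using r(2) by (auto simp del: scaleR_minus_right)
    then have "(r/2) *\<^sub>R b = 0" by (rule rc(4))
    then show False using r(1) b by auto
  qed
  have Mx0: "M x0 > 0" using x0nz nM(5)[of x0] nM(7)[of x0] by linarith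
  have Nx0: "N x0 > 0" using x0nz nN(5)[of x0] nN(7)[of x0] by linarith
  have "N ((1 / N x0) *\<^sub>R x0) = 1" using Nx0 nN(6)[of "1 / N x0" x0] by simp
  moreover have "(1 / N x0) *\<^sub>R x0 \<in> L" using x0(1) assms(4) by (simp add: subspace_scale)
  ultimately have x1a: "(1 / N x0) *\<^sub>R x0 \<in> S1" by (simp add: S1_def)
  have x1: "(1 / N x0) *\<^sub>R x0 \<in> S1" "(1 / N x0) *\<^sub>R x0 \<in> K"
    using x1a rc(2)[OF x0K, of "1 / N x0"] Nx0 by auto
  have G0: "0 \<le> G v" for v
  proof -
    have "ereal 0 \<le> lam K v ((1 / N x0) *\<^sub>R x0)" by (rule lam_ge) (use x1 in simp)
    also have "\<dots> \<le> G v" unfolding G_def by (rule SUP_upper[OF x1(1)])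
    finally show ?thesis by (simp add: zero_ereal_def)
  qed
  have B0: "0 \<in> B" using nN(1) subspace_0[OF assms(4)] by (simp add: B_def)
  have F0: "0 \<le> F v" for v
  proof -
    have "ereal 0 \<le> lam K v 0" by (rule lam_ge) (use rc(1) in simp)
    also have "\<dots> \<le> F v" unfolding F_def by (rule SUP_upper[OF B0])
    finally show ?thesis by (simp add: zero_ereal_def)
  qed
  have ptd: "t \<le> 0" if "v \<in> K" "M v = 1" "- (t *\<^sub>R v) \<in> K" for v t
  proof (rule ccontr)
    assume "\<not> t \<le> 0"
    then have "(1/t) *\<^sub>R (- (t *\<^sub>R v)) \<in> K" using rc(2)[OF that(3), of "1/t"] by simp
    moreover have "(1/t) *\<^sub>R (- (t *\<^sub>R v)) = -v" using \<open>\<not> t \<le> 0\<close> by simp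
    ultimately have "-v \<in> K" by simp
    then have "v = 0" using rc(4) that(1) by blast
    then show False using that(2) nM(1) by simp
  qed
  have FG: "F v = G v" if "v \<in> Bv" for v
  proof (rule antisym)
    show "G v \<le> F v" unfolding F_def G_def by (rule SUP_subset_mono) (auto simp: S1_def B_def)
    show "F v \<le> G v" unfolding F_def
    proof (rule SUP_least)
      fix x assume xB: "x \<in> B"
      show "lam K v x \<le> G v"
        unfolding lam_def
      proof (rule Sup_least, clarify)
        fix t assume xt: "x - t *\<^sub>R v \<in> K"
        show "ereal t \<le> G v"
        proof (cases "t \<le> 0")
          case True
          then have "ereal t \<le> 0" by (simp add: zero_ereal_def)
          then show ?thesis using G0[of v] by (rule order_trans)
        next
          case False
          have xnz: "x \<noteq> 0"
          proof
            assume "x = 0" with xt ptd[of v t] that False show False by (auto simp: Bv_def)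
          qed
          have "N x \<noteq> 0" using xnz nN(7)[of x] by simp
          then have Nx: "N x > 0" "N x \<le> 1" using nN(5)[of x] xB by (auto simp: B_def)
          have "N ((1 / N x) *\<^sub>R x) = 1" using Nx nN(6)[of "1 / N x" x] by simp
          moreover have "(1 / N x) *\<^sub>R x \<in> L" using xB assms(4) by (simp add: subspace_scale B_def)
          ultimately have xs: "(1 / N x) *\<^sub>R x \<in> S1" by (simp add: S1_def)
          have "(1 / N x) *\<^sub>R (x - t *\<^sub>R v) \<in> K" using rc(2)[OF xt] Nx by simp
          then have "(1 / N x) *\<^sub>R x - (t / N x) *\<^sub>R v \<in> K" by (simp add: scaleR_diff_right)
          then have "ereal (t / N x) \<le> lam K v ((1 / N x) *\<^sub>R x)" by (rule lam_ge)
          also have "\<dots> \<le> G v" unfolding G_def by (rule SUP_upper[OF xs])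
          finally have tG: "ereal (t / N x) \<le> G v" .
          have "t \<le> t / N x" using Nx False by (simp add: le_divide_eq)
          then have "ereal t \<le> ereal (t / N x)" by simp
          then show ?thesis using tG by (rule order_trans)
        qed
      qed
    qed
  qed
  define v0 where "v0 = (1 / M x0) *\<^sub>R x0"
  have v0: "v0 \<in> K" "M v0 = 1" using rc(2)[OF x0K, of "1 / M x0"] Mx0 nM(6)[of "1 / M x0" x0]
    by (auto simp: v0_def)
  obtain u0 where u0: "u0 \<in> dual_cone K" "inner u0 v0 = 1" "\<forall>x\<in>{0}. inner u0 x \<le> 1"
  proof -
    have "\<exists>u\<in>dual_cone K. inner u v0 = 1 \<and> (\<forall>x\<in>{0}. inner u x \<le> 1)"
    proof (rule sep1[OF assms(1) v0(1), of "{0}" 0 1])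
      show "t \<le> 0" if "x \<in> {0}" "x - t *\<^sub>R v0 \<in> K" for x t
        using that ptd[OF v0, of t] by simp
    qed simp_all
    then show ?thesis using that by blast
  qed
  have q0: "(v0, 0, u0) \<in> T" using v0 u0 by (simp add: memT orthogonal_comp_def orthogonal_def)
  define R where "R = \<phi> (v0, 0, u0)"
  define TR where "TR = {p\<in>T. \<phi> p \<le> R}"
  have contphi: "continuous_on A \<phi>" for A unfolding \<phi>_def
  proof -
    have "continuous_on A (\<lambda>p::'a\<times>'a\<times>'a. snd (snd p) - fst (snd p))" by (intro continuous_intros)
    then show "continuous_on A (\<lambda>p::'a\<times>'a\<times>'a. dual_norm N (snd (snd p) - fst (snd p)))"
      using continuous_on_compose2[OF dn_cont[OF assms(2)], where t=UNIV] by blast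
  qed
  have closedTR: "closed TR"
  proof -
    have "TR = {p. fst p \<in> K} \<inter> {p. fst (snd p) \<in> orthogonal_comp L} \<inter> {p. snd (snd p) \<in> dual_cone K}
      \<inter> {p. M (fst p) \<in> {1}} \<inter> {p. inner (snd (snd p)) (fst p) \<in> {1}} \<inter> {p. \<phi> p \<in> {..R}}"
    proof (rule set_eqI)
      fix p :: "'a\<times>'a\<times>'a"
      obtain v y u where "p = (v, y, u)" by (cases p) auto
      then show "p \<in> TR \<longleftrightarrow> p \<in> {p. fst p \<in> K} \<inter> {p. fst (snd p) \<in> orthogonal_comp L} \<inter> {p. snd (snd p) \<in> dual_cone K}
      \<inter> {p. M (fst p) \<in> {1}} \<inter> {p. inner (snd (snd p)) (fst p) \<in> {1}} \<inter> {p. \<phi> p \<in> {..R}}"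
        unfolding TR_def by (simp add: memT)
    qed
    moreover have cM: "continuous_on UNIV (\<lambda>p::'a\<times>'a\<times>'a. M (fst p))"
      by (rule continuous_on_compose2[OF isn_cont[OF assms(3)], where t=UNIV]) (auto intro!: continuous_intros)
    moreover have "closed {p::'a\<times>'a\<times>'a. fst p \<in> K}" by (rule closed_pre[OF rc(5)]) (auto intro!: continuous_intros)
    moreover have "closed {p::'a\<times>'a\<times>'a. fst (snd p) \<in> orthogonal_comp L}"
      by (rule closed_pre[OF closed_subspace[OF subspace_orthogonal_comp]]) (auto intro!: continuous_intros)
    moreover have "closed {p::'a\<times>'a\<times>'a. snd (snd p) \<in> dual_cone K}"
      by (rule closed_pre[OF closed_dual_cone]) (auto intro!: continuous_intros)
    moreover have "closed {p::'a\<times>'a\<times>'a. inner (snd (snd p)) (fst p) \<in> {1}}"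
      by (rule closed_pre) (auto intro!: continuous_intros)
    moreover have "closed {p::'a\<times>'a\<times>'a. \<phi> p \<in> {..R}}"
      by (rule closed_pre) (auto intro!: contphi)
    moreover have "closed {p::'a\<times>'a\<times>'a. M (fst p) \<in> {1}}"
      by (rule closed_pre[OF _ cM]) simp
    ultimately show ?thesis by (metis (no_types, lifting) closed_Int)
  qed
  have boundedTR: "bounded TR"
  proof -
    obtain cM where cM: "cM > 0" "\<And>x. cM * norm x \<le> M x" using isn_lower[OF assms(3)] by blast
    obtain CN where CN: "CN > 0" "\<And>u. norm u \<le> CN * dual_norm N u" using dn_norm[OF assms(2)] by blast
    define bd where "bd = 1 / cM + 2 * (2 * R * N x0 / r) + CN * R"
    have "norm p \<le> bd" if "p \<in> TR" for p
    proof -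
      obtain v y u where p: "p = (v, y, u)" by (cases p) auto
      have vyu: "v \<in> K" "y \<in> orthogonal_comp L" "u \<in> dual_cone K" "M v = 1" "inner u v = 1"
          "dual_norm N (u - y) \<le> R"
        using that by (auto simp: TR_def p memT \<phi>_def)
      have "cM * norm v \<le> 1" using cM(2)[of v] vyu(4) by simp
      then have nv: "norm v \<le> 1 / cM" using cM(1) by (simp add: pos_le_divide_eq mult.commute)
      have "CN * dual_norm N (u - y) \<le> CN * R" using vyu(6) CN(1) by simp
      then have nw: "norm (u - y) \<le> CN * R" using CN(2)[of "u - y"] by linarith
      have "inner y x0 = 0" using vyu(2) x0(1) by (simp add: orthogonal_comp_def orthogonal_def inner_commute)
      then have "inner u x0 = inner (u - y) x0" by (simp add: inner_diff_left)
      also have "\<dots> \<le> dual_norm N (u - y) * N x0" by (rule dn_le[OF assms(2)])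
      also have "\<dots> \<le> R * N x0" using vyu(6) Nx0 by (simp add: mult_right_mono)
      finally have "(r/2) * norm u \<le> R * N x0" using dual_int_bound[OF r(2) r(1) vyu(3)] by simp
      then have "norm u * r \<le> 2 * R * N x0" by (simp add: algebra_simps)
      then have nu: "norm u \<le> 2 * R * N x0 / r" using r(1) by (simp add: pos_le_divide_eq)
      have ny: "norm y \<le> norm u + norm (u - y)" using norm_triangle_ineq4[of u "u - y"] by simp
      have "norm p \<le> norm v + (norm y + norm u)" unfolding p
        using norm_Pair_le[of v "(y, u)"] norm_Pair_le[of y u] by simp
      also have "\<dots> \<le> bd" using nv nu ny nw by (simp add: bd_def)
      finally show ?thesis .
    qed
    then show ?thesis unfolding bounded_iff by blast
  qed
  have cTR: "compact TR" using closedTR boundedTR by (simp add: compact_eq_bounded_closed)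
  have "(v0, 0, u0) \<in> TR" unfolding TR_def R_def using q0 by simp
  then have neTR: "TR \<noteq> {}" by blast
  have "\<exists>x\<in>TR. \<forall>y\<in>TR. \<phi> x \<le> \<phi> y" by (rule continuous_attains_inf[OF cTR neTR contphi])
  then obtain ps where ps: "ps \<in> TR" "\<And>q. q \<in> TR \<Longrightarrow> \<phi> ps \<le> \<phi> q" by blast
  have psT: "ps \<in> T" using ps(1) by (simp add: TR_def)
  have minT: "\<phi> ps \<le> \<phi> q" if "q \<in> T" for q
  proof (cases "\<phi> q \<le> R")
    case True then show ?thesis using ps(2) that by (simp add: TR_def)
  next
    case False then show ?thesis using ps(1) unfolding TR_def by simp
  qed
  obtain vs ys us where psv: "ps = (vs, ys, us)" by (cases ps) auto
  have vyu: "vs \<in> K" "ys \<in> orthogonal_comp L" "us \<in> dual_cone K" "M vs = 1" "inner us vs = 1"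
    using psT by (simp_all add: psv memT)
  have phips: "\<phi> ps = dual_norm N (us - ys)" by (simp add: psv \<phi>_def)
  have cB: "compact B" unfolding B_def
    using closed_Int_compact[OF closed_subspace[OF assms(4)] nball_compact(1)[OF assms(2)]]
    by (simp add: Collect_conj_eq)
  have cvB: "convex B" unfolding B_def
    using convex_Int[OF subspace_imp_convex[OF assms(4)] nball_compact(2)[OF assms(2)]]
    by (simp add: Collect_conj_eq)
  have claim1: "ereal (\<phi> ps) \<le> F v" if vB: "v \<in> Bv" for v
  proof (cases "F v = \<infinity>")
    case True then show ?thesis by simp
  next
    case False
    obtain s where Fs: "F v = ereal s" using F0[of v] False by (cases "F v") auto
    have hyp: "t \<le> s" if "x \<in> B" "x - t *\<^sub>R v \<in> K" for x t
    proof -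
      have "ereal t \<le> lam K v x" by (rule lam_ge[OF that(2)])
      also have "\<dots> \<le> F v" unfolding F_def by (rule SUP_upper[OF that(1)])
      finally show ?thesis using Fs by simp
    qed
    have vK: "v \<in> K" "M v = 1" using vB by (auto simp: Bv_def)
    have "\<phi> ps \<le> s"
    proof (rule le_of_all_gt)
      fix c assume sc: "s < c"
      have "\<exists>u\<in>dual_cone K. inner u v = 1 \<and> (\<forall>x\<in>B. inner u x \<le> (s + c) / 2)"
        by (rule sep1[OF assms(1) vK(1) cB cvB B0 hyp]) (use sc in auto)
      then obtain u where u: "u \<in> dual_cone K" "inner u v = 1" "\<And>x. x \<in> B \<Longrightarrow> inner u x \<le> (s + c) / 2"
        by blast
      have "\<exists>y\<in>orthogonal_comp L. dual_norm N (u - y) \<le> c"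
        by (rule sep2[OF assms(2) assms(4), of u "(s + c) / 2"]) (use u(3) sc in \<open>auto simp: B_def\<close>)
      then obtain y where y: "y \<in> orthogonal_comp L" "dual_norm N (u - y) \<le> c" by blast
      have "(v, y, u) \<in> T" using vK u y by (simp add: memT)
      then have "\<phi> ps \<le> \<phi> (v, y, u)" by (rule minT)
      also have "\<dots> \<le> c" using y(2) by (simp add: \<phi>_def)
      finally show "\<phi> ps \<le> c" .
    qed
    then show ?thesis using Fs by simp
  qed
  have claim2: "F vs \<le> ereal (\<phi> ps)" unfolding F_def
  proof (rule SUP_least)
    fix x assume xB: "x \<in> B"
    show "lam K vs x \<le> ereal (\<phi> ps)"
    proof (rule lam_le)
      fix t assume xt: "x - t *\<^sub>R vs \<in> K"
      have "0 \<le> inner us (x - t *\<^sub>R vs)" using vyu(3) xt by (simp add: dual_cone_def)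
      then have "t \<le> inner us x" using vyu(5) by (simp add: inner_diff_right)
      have "inner ys x = 0" using vyu(2) xB by (simp add: orthogonal_comp_def orthogonal_def inner_commute B_def)
      then have "inner us x = inner (us - ys) x" by (simp add: inner_diff_left)
      also have "\<dots> \<le> dual_norm N (us - ys) * N x" by (rule dn_le[OF assms(2)])
      also have "\<dots> \<le> dual_norm N (us - ys) * 1"
        using xB dn_nonneg[OF assms(2)] by (intro mult_left_mono) (auto simp: B_def)
      finally show "t \<le> \<phi> ps" using \<open>t \<le> inner us x\<close> phips by simp
    qed
  qed
  have vsB: "vs \<in> Bv" using vyu by (simp add: Bv_def)
  have sig: "sigma K N M L = (INF v\<in>Bv. F v)" by (simp add: sigma_def F_def B_def Bv_def)
  have e1: "(INF v\<in>Bv. F v) = ereal (\<phi> ps)"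
  proof (rule antisym)
    show "(INF v\<in>Bv. F v) \<le> ereal (\<phi> ps)" using INF_lower[OF vsB, of F] claim2 by (rule order_trans)
    show "ereal (\<phi> ps) \<le> (INF v\<in>Bv. F v)" by (rule INF_greatest) (rule claim1)
  qed
  have e2: "F vs = ereal (\<phi> ps)" by (rule antisym[OF claim2 claim1[OF vsB]])
  have e3: "(INF v\<in>Bv. G v) = (INF v\<in>Bv. F v)" by (rule INF_cong[OF refl]) (simp add: FG)
  have e4: "(INF (v, y, u)\<in>T. ereal (dual_norm N (u - y))) = ereal (\<phi> ps)"
  proof -
    have "(INF (v, y, u)\<in>T. ereal (dual_norm N (u - y))) = (INF p\<in>T. ereal (\<phi> p))"
      by (rule INF_cong[OF refl]) (simp add: \<phi>_def split: prod.split)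
    also have "\<dots> = ereal (\<phi> ps)"
      by (rule antisym[OF INF_lower[OF psT] INF_greatest]) (simp add: minT)
    finally show ?thesis .
  qed
  have c1: "sigma K N M L = (INF v\<in>Bv. G v)" using sig e3 by simp
  have c2: "sigma K N M L = (INF (v, y, u)\<in>T. ereal (dual_norm N (u - y)))" using sig e1 e4 by simp
  have c3: "sigma K N M L = F vs" using sig e1 e2 by simp
  have c4: "sigma K N M L = G vs" using c3 FG[OF vsB] by simp
  have c5: "sigma K N M L = ereal (dual_norm N (us - ys))" using sig e1 phips by simp
  show ?thesis
    using c1 c2 c3 c4 c5 vyu unfolding Bv_def G_def S1_def F_def B_def T_def by blast
qed

end
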